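(* Let $\rho$ be a qubit state and define the concatenation protocol as follows. Set $\sigma_{(0)}=\rho$. Given $\sigma_{(m)}$ with $p^{(m)}_{00}=\langle0|\sigma_{(m)}|0\rangle$, let $U_m$ be the two-qubit unitary acting as the identity on $|00\rangle,|11\rangle$ and as the rotation $|01\rangle\mapsto\cos\theta_m|01\rangle+\sin\theta_m|10\rangle$, $|10\rangle\mapsto-\sin\theta_m|01\rangle+\cos\theta_m|10\rangle$ with $\cos\theta_m=1/\sqrt{1+(2p^{(m)}_{00}-1)^2}$, $\sin\theta_m=(2p^{(m)}_{00}-1)/\sqrt{1+(2p^{(m)}_{00}-1)^2}$, and set $\sigma_{(m+1)}=\mathrm{tr}_B\big[U_m(\sigma_{(m)}\otimes\sigma_{(m)})U_m^\dagger\big]$ (so $\sigma_{(m)}$ consumes $2^m$ copies of $\rho$). Then for every $m$, $$M^{(1)}(\sigma_{(m)})\le\sqrt{2\,\mathrm{tr}(\rho^2)-1}.$$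
   Context: Qubit basis $\{|0\rangle,|1\rangle\}$ is the eigenbasis of $L=|1\rangle\langle1|$. The coherence measure is $M^{(1)}(\sigma):=\|\,|1\rangle\langle1|\sigma|0\rangle\langle0|\,\|_1=|\langle0|\sigma|1\rangle|$. The unitaries $U_m$ commute with $L\otimes\mathbb{I}+\mathbb{I}\otimes L$ and are the optimal two-copy coherence-concentrating unitaries for $\sigma_{(m)}$. *)

theory Defs
  imports Complex_Main
begin

text \<open>Computational basis of a qubit indexed by bool: False = |0>, True = |1>.
  One-qubit operators are matrices bool => bool => complex (row, column);
  two-qubit operators are indexed by pairs (first factor A, second factor B).\<close>

type_synonym qop = "bool \<Rightarrow> bool \<Rightarrow> complex"
type_synonym qop2 = "bool \<times> bool \<Rightarrow> bool \<times> bool \<Rightarrow> complex"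

definition trace1 :: "qop \<Rightarrow> complex" where
  "trace1 A = (\<Sum>i\<in>UNIV. A i i)"

definition hermitian1 :: "qop \<Rightarrow> bool" where
  "hermitian1 A \<longleftrightarrow> (\<forall>i j. cnj (A j i) = A i j)"

definition psd1 :: "qop \<Rightarrow> bool" where
  "psd1 A \<longleftrightarrow> hermitian1 A \<and>
     (\<forall>v :: bool \<Rightarrow> complex. 0 \<le> Re (\<Sum>i\<in>UNIV. \<Sum>j\<in>UNIV. cnj (v i) * A i j * v j))"

definition qubit_state :: "qop \<Rightarrow> bool" where
  "qubit_state \<rho> \<longleftrightarrow> psd1 \<rho> \<and> trace1 \<rho> = 1"

definition mult1 :: "qop \<Rightarrow> qop \<Rightarrow> qop" where
  "mult1 A B = (\<lambda>i j. \<Sum>k\<in>UNIV. A i k * B k j)"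

definition mult2 :: "qop2 \<Rightarrow> qop2 \<Rightarrow> qop2" where
  "mult2 A B = (\<lambda>i j. \<Sum>k\<in>UNIV. A i k * B k j)"

definition adj2 :: "qop2 \<Rightarrow> qop2" where
  "adj2 A = (\<lambda>i j. cnj (A j i))"

definition tensor :: "qop \<Rightarrow> qop \<Rightarrow> qop2" where
  "tensor A B = (\<lambda>(i, k) (j, l). A i j * B k l)"

definition ptrace_B :: "qop2 \<Rightarrow> qop" where
  "ptrace_B X = (\<lambda>i j. \<Sum>k\<in>UNIV. X (i, k) (j, k))"

definition rotU :: "real \<Rightarrow> real \<Rightarrow> qop2" where
  "rotU c s = (\<lambda>r col.
     if r = (False, False) \<and> col = (False, False) then 1
     else if r = (True, True) \<and> col = (True, True) then 1
     else if r = (False, True) \<and> col = (False, True) then complex_of_real c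
     else if r = (True, False) \<and> col = (False, True) then complex_of_real s
     else if r = (False, True) \<and> col = (True, False) then complex_of_real (- s)
     else if r = (True, False) \<and> col = (True, False) then complex_of_real c
     else 0)"

definition p00 :: "qop \<Rightarrow> real" where
  "p00 \<sigma> = Re (\<sigma> False False)"

definition cos_theta :: "qop \<Rightarrow> real" where
  "cos_theta \<sigma> = 1 / sqrt (1 + (2 * p00 \<sigma> - 1)\<^sup>2)"

definition sin_theta :: "qop \<Rightarrow> real" where
  "sin_theta \<sigma> = (2 * p00 \<sigma> - 1) / sqrt (1 + (2 * p00 \<sigma> - 1)\<^sup>2)"

definition U_step :: "qop \<Rightarrow> qop2" where
  "U_step \<sigma> = rotU (cos_theta \<sigma>) (sin_theta \<sigma>)"

definition concat_step :: "qop \<Rightarrow> qop" where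
  "concat_step \<sigma> = ptrace_B (mult2 (mult2 (U_step \<sigma>) (tensor \<sigma> \<sigma>)) (adj2 (U_step \<sigma>)))"

fun sigma_seq :: "qop \<Rightarrow> nat \<Rightarrow> qop" where
  "sigma_seq \<rho> 0 = \<rho>"
| "sigma_seq \<rho> (Suc m) = concat_step (sigma_seq \<rho> m)"

definition M1 :: "qop \<Rightarrow> real" where
  "M1 \<sigma> = cmod (\<sigma> False True)"

text \<open>Purity tr(rho^2) (real for Hermitian rho; we take the real part).\<close>
definition purity :: "qop \<Rightarrow> real" where
  "purity \<rho> = Re (trace1 (mult1 \<rho> \<rho>))"

end

theory Submission imports Defs begin
lemma UNIV2: "(UNIV :: (bool\<times>bool) set) = {(False,False),(False,True),(True,False),(True,True)}" by auto

lemma step_entries: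
  fixes \<sigma> :: qop and c s :: real
  defines "Y \<equiv> ptrace_B (mult2 (mult2 (rotU c s) (tensor \<sigma> \<sigma>)) (adj2 (rotU c s)))"
  shows "Y False False = \<sigma> False False ^ 2 + of_real (c^2+s^2) * \<sigma> False False * \<sigma> True True
            - 2 * of_real (c*s) * \<sigma> False True * \<sigma> True False"
    and "Y True True = \<sigma> True True ^ 2 + of_real (c^2+s^2) * \<sigma> False False * \<sigma> True True
            + 2 * of_real (c*s) * \<sigma> False True * \<sigma> True False"
    and "Y False True = \<sigma> False True * (of_real c * (\<sigma> False False + \<sigma> True True) + of_real s * (\<sigma> False False - \<sigma> True True))"
    and "Y True False = \<sigma> True False * (of_real c * (\<sigma> False False + \<sigma> True True) + of_real s * (\<sigma> False False - \<sigma> True True))"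
  unfolding Y_def
  by (simp_all add: ptrace_B_def mult2_def adj2_def tensor_def rotU_def UNIV2 UNIV_bool algebra_simps power2_eq_square)

lemma real_ineq:
  fixes z w :: real
  assumes "w \<ge> 0" "z^2 + w \<le> 1"
  shows "(z - z*w/(1+z^2))^2 + w*(1+z^2) \<le> z^2 + w"
proof -
  define A where "A = 1 + z^2"
  have A: "A > 0" unfolding A_def by (simp add: add_pos_nonneg)
  have z21: "z^2 \<le> 1" using assms by linarith
  have "z^2*z^2 \<le> z^2*1" by (rule mult_left_mono[OF z21]) simp
  hence z4: "z^4 \<le> z^2" by (simp add: power4_eq_xxxx power2_eq_square mult.assoc)
  have key: "(z^2 + w)*A^2 - (z*(A-w))^2 - w*A^3 = w*z^2*(1 - z^4 - w)"
    unfolding A_def by (simp add: algebra_simps power2_eq_square power3_eq_cube power4_eq_xxxx)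
  have "w*z^2*(1 - z^4 - w) \<ge> 0" using assms z4 by simp
  hence "(z*(A-w))^2 + w*A^3 \<le> (z^2 + w)*A^2" using key by linarith
  hence "((z*(A-w))^2 + w*A^3)/A^2 \<le> z^2 + w" using A by (simp add: divide_le_eq)
  moreover have "((z*(A-w))^2 + w*A^3)/A^2 = (z - z*w/A)^2 + w*A"
    using A by (simp add: field_simps power2_eq_square power3_eq_cube)
  ultimately show ?thesis unfolding A_def by simp
qed

definition inv :: "real \<Rightarrow> qop \<Rightarrow> bool" where
  "inv R \<sigma> \<longleftrightarrow> (\<exists>p x. \<sigma> False False = of_real p \<and> \<sigma> True True = of_real (1-p)
     \<and> \<sigma> False True = x \<and> \<sigma> True False = cnj x \<and> (2*p-1)^2 + 4*(cmod x)^2 \<le> R \<and> R \<le> 1)"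

lemma inv_step:
  assumes "inv R \<sigma>"
  shows "inv R (concat_step \<sigma>)"
proof -
  obtain p x where a: "\<sigma> False False = of_real p" and e: "\<sigma> True True = of_real (1-p)"
    and b: "\<sigma> False True = x" and d: "\<sigma> True False = cnj x"
    and R: "(2*p-1)^2 + 4*(cmod x)^2 \<le> R" and R1: "R \<le> 1"
    using assms unfolding inv_def by blast
  define z where "z = 2*p-1"
  define A where "A = 1 + z^2"
  define q where "q = sqrt A"
  define n where "n = (cmod x)^2"
  have A: "A > 0" unfolding A_def by (simp add: add_pos_nonneg)
  have q: "q > 0" "q^2 = A" unfolding q_def using A by auto
  have p00: "p00 \<sigma> = p" unfolding p00_def a by simp
  have ct: "cos_theta \<sigma> = 1/q" unfolding cos_theta_def p00 q_def A_def z_def by simp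
  have st: "sin_theta \<sigma> = z/q" unfolding sin_theta_def p00 q_def A_def z_def by simp
  have cs1: "(1/q)^2 + (z/q)^2 = 1" using q A unfolding A_def by (simp add: field_simps)
  have cs2: "(1/q)*(z/q) = z/A" using q by (simp add: field_simps power2_eq_square)
  have xx: "x * cnj x = of_real n" unfolding n_def by (rule complex_norm_square[symmetric])
  have cq: "(1/q) + (z/q)*z = q" using q unfolding A_def by (simp add: field_simps power2_eq_square)
  define p' where "p' = p - 2*(z/A)*n"
  define x' where "x' = x * of_real q"
  have Y: "concat_step \<sigma> = ptrace_B (mult2 (mult2 (rotU (1/q) (z/q)) (tensor \<sigma> \<sigma>)) (adj2 (rotU (1/q) (z/q))))"
    unfolding concat_step_def U_step_def ct st ..
  have e1: "concat_step \<sigma> False False = of_real p'"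
    unfolding Y step_entries a b d e cs1 cs2 p'_def
    by (simp add: xx[symmetric] power2_eq_square algebra_simps)
  have e2: "concat_step \<sigma> True True = of_real (1-p')"
    unfolding Y step_entries a b d e cs1 cs2 p'_def
    by (simp add: xx[symmetric] power2_eq_square algebra_simps)
  have fac: "complex_of_real (1/q) * (of_real p + of_real (1-p)) + complex_of_real (z/q) * (of_real p - of_real (1-p)) = of_real q"
  proof -
    have h1: "(of_real p + of_real (1-p) :: complex) = 1" by (simp flip: of_real_add)
    have h2: "(of_real p - of_real (1-p) :: complex) = of_real z" unfolding z_def by (simp flip: of_real_diff)
    have "complex_of_real (1/q) * (of_real p + of_real (1-p)) + complex_of_real (z/q) * (of_real p - of_real (1-p))
       = of_real (1/q + z/q*z)" unfolding h1 h2 by (simp only: of_real_add of_real_mult mult_1_right)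
    also have "\<dots> = of_real q" using cq by simp
    finally show ?thesis .
  qed
  have e3: "concat_step \<sigma> False True = x'"
    unfolding Y step_entries a b d e x'_def fac ..
  have e4: "concat_step \<sigma> True False = cnj x'"
    unfolding Y step_entries a b d e x'_def fac by simp
  have n0: "n \<ge> 0" unfolding n_def by simp
  have "z^2 + 4*n \<le> 1" using R R1 unfolding z_def n_def by simp
  from real_ineq[OF _ this] n0
  have I: "(z - z*(4*n)/A)^2 + (4*n)*A \<le> z^2 + 4*n" unfolding A_def by simp
  have h1: "2*p'-1 = z - z*(4*n)/A" unfolding p'_def z_def by (simp add: field_simps)
  have h2: "(cmod x')^2 = n*A" unfolding x'_def n_def using q
    by (simp add: norm_mult power_mult_distrib)
  have zR: "z^2 + 4*n \<le> R" using R unfolding z_def n_def by simp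
  have "(2*p'-1)^2 + 4*(cmod x')^2 = (z - z*(4*n)/A)^2 + (4*n)*A" unfolding h1 h2 by simp
  hence "(2*p'-1)^2 + 4*(cmod x')^2 \<le> R" using I zR by linarith
  thus ?thesis unfolding inv_def using e1 e2 e3 e4 R1 by blast
qed


lemma inv_init:
  assumes "qubit_state \<rho>"
  shows "inv (2 * purity \<rho> - 1) \<rho>"
proof -
  have herm: "\<And>i j. cnj (\<rho> j i) = \<rho> i j" and psd: "\<And>v. 0 \<le> Re (\<Sum>i\<in>UNIV. \<Sum>j\<in>UNIV. cnj (v i) * \<rho> i j * v j)"
    and tr: "\<rho> False False + \<rho> True True = 1"
    using assms unfolding qubit_state_def psd1_def hermitian1_def trace1_def by (auto simp: UNIV_bool)
  define p where "p = Re (\<rho> False False)"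
  define x where "x = \<rho> False True"
  define n where "n = (cmod x)^2"
  have a: "\<rho> False False = of_real p" unfolding p_def using herm[of False False]
    by (simp add: complex_eq_iff)
  have e: "\<rho> True True = of_real (1-p)" using tr a by (simp add: algebra_simps)
  have d: "\<rho> True False = cnj x" unfolding x_def using arg_cong[OF herm[of False True], of cnj] by simp
  have xx: "x * cnj x = of_real n" unfolding n_def by (rule complex_norm_square[symmetric])
  have xx': "cnj x * x = of_real n" using xx by (simp add: mult.commute)
  have Q: "Re (\<Sum>i\<in>UNIV. \<Sum>j\<in>UNIV. cnj (v i) * \<rho> i j * v j) =
     Re (cnj (v False) * of_real p * v False + cnj (v False) * x * v True + cnj (v True) * cnj x * v False
        + cnj (v True) * of_real (1-p) * v True)" for v
    by (simp add: UNIV_bool a e d x_def[symmetric])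
  have pos: "n \<le> p*(1-p)"
  proof (cases "p > 0")
    case True
    have "0 \<le> Re (cnj (-x) * of_real p * (-x) + cnj (-x) * x * of_real p + cnj (of_real p) * cnj x * (-x)
        + cnj (of_real p) * of_real (1-p) * of_real p)" using psd[of "\<lambda>i. if i then of_real p else -x"] unfolding Q by simp
    also have "\<dots> = p * (p*(1-p) - n)"
      by (simp add: xx xx' algebra_simps flip: of_real_mult) 
    finally show ?thesis using True by (simp add: zero_le_mult_iff)
  next
    case False
    have "0 \<le> Re (cnj (of_real (1-p)) * of_real p * of_real (1-p) + cnj (of_real (1-p)) * x * (- cnj x) + cnj (- cnj x) * cnj x * of_real (1-p)
        + cnj (- cnj x) * of_real (1-p) * (- cnj x))" using psd[of "\<lambda>i. if i then - cnj x else of_real (1-p)"] unfolding Q by simp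
    also have "\<dots> = (1-p) * (p*(1-p) - n)"
      by (simp add: xx xx' algebra_simps flip: of_real_mult) 
    finally show ?thesis using False by (simp add: zero_le_mult_iff)
  qed
  have pur: "purity \<rho> = p^2 + 2*n + (1-p)^2"
    unfolding purity_def trace1_def mult1_def
    by (simp add: UNIV_bool a e d x_def[symmetric] xx xx' power2_eq_square)
  show ?thesis unfolding inv_def
    apply (rule exI[of _ p], rule exI[of _ x])
    using a e d pos pur by (auto simp: x_def n_def power2_eq_square algebra_simps)
qed

theorem mainTheorem3:
  fixes \<rho> :: qop and m :: nat
  assumes "qubit_state \<rho>"
  shows "M1 (sigma_seq \<rho> m) \<le> sqrt (2 * purity \<rho> - 1)"
proof -
  have "inv (2 * purity \<rho> - 1) (sigma_seq \<rho> m)"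
    by (induction m) (simp_all add: inv_init[OF assms] inv_step)
  then obtain p x where h: "sigma_seq \<rho> m False True = x" "(2*p-1)^2 + 4*(cmod x)^2 \<le> 2 * purity \<rho> - 1"
    unfolding inv_def by blast
  have "(cmod x)^2 \<le> 4*(cmod x)^2" by simp
  moreover have "0 \<le> (2*p-1)^2" by simp
  ultimately have "(cmod x)^2 \<le> 2 * purity \<rho> - 1" using h(2) by linarith
  moreover have "M1 (sigma_seq \<rho> m) = cmod x" unfolding M1_def h(1) ..
  ultimately show ?thesis by (simp add: real_le_rsqrt)
qed

end
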